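(* Let $X=C_1\cup C_2$ be the Alexandroff double circle. Then $X$ is a compact Hausdorff first-countable space, $C_1\in\mathsf{K}(X)$, but the Smyth power space $P_S(X)$ is not first-countable; in fact $C_1$ has no countable neighborhood base in $P_S(X)$.
   Context: In $\mathbb R^2$ let $C_i=\{(x,y): x^2+y^2=i\}$ for $i=1,2$, $X=C_1\cup C_2$, and let $p:C_1\to C_2$ be the radial projection from the origin. Topologize $X$ by neighborhood bases: for $z\in C_2$ the base is $\{\{z\}\}$; for $z\in C_1$ the base is $\{U_j(z): j\in\mathbb N\}$ with $U_j(z)=V_j\cup p(V_j\setminus\{z\})$, where $V_j$ is the arc of $C_1$ centered at $z$ of length $1/j$. $\mathsf{K}(X)$ is the set of nonempty compact saturated subsets of $X$ (for a $T_1$ space, all nonempty compact subsets). For open $U$, $\Box U=\{K\in\mathsf{K}(X):K\subseteq U\}$; the Smyth power space $P_S(X)$ is $\mathsf{K}(X)$ with the topology having base $\{\Box U: U\text{ open}\}$. *)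

theory Defs
  imports "HOL-Analysis.Analysis"
begin

text \<open>The plane R^2 is represented by the complex numbers.
  C_i = {(x,y). x^2 + y^2 = i}, i = 1, 2.\<close>

definition C1 :: "complex set" where
  "C1 = {z. (Re z)^2 + (Im z)^2 = 1}"

definition C2 :: "complex set" where
  "C2 = {z. (Re z)^2 + (Im z)^2 = 2}"

definition dcX :: "complex set" where
  "dcX = C1 \<union> C2"

definition proj :: "complex \<Rightarrow> complex" where
  "proj z = complex_of_real (sqrt 2) * z"

text \<open>V j z: the (open) arc of C_1 centred at z of length 1/j, i.e. the points of C_1
  whose angular distance from z is less than 1/(2j).\<close>
definition arcV :: "nat \<Rightarrow> complex \<Rightarrow> complex set" where
  "arcV j z = {w \<in> C1. \<bar>Arg (w / z)\<bar> < 1 / (2 * real j)}"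

definition nbhdU :: "nat \<Rightarrow> complex \<Rightarrow> complex set" where
  "nbhdU j z = arcV j z \<union> proj ` (arcV j z - {z})"

text \<open>Open sets of the topology given by the neighbourhood bases:
  {{z}} for z in C_2, and {U_j(z) : j \<ge> 1} for z in C_1.\<close>
definition dc_open :: "complex set \<Rightarrow> bool" where
  "dc_open S \<longleftrightarrow> S \<subseteq> dcX \<and>
     (\<forall>z\<in>S. (z \<in> C2 \<and> {z} \<subseteq> S) \<or> (z \<in> C1 \<and> (\<exists>j\<ge>1. nbhdU j z \<subseteq> S)))"

lemma arcV_mono: "j \<le> k \<Longrightarrow> 1 \<le> j \<Longrightarrow> arcV k z \<subseteq> arcV j z"
proof
  fix w assume jk: "j \<le> k" "1 \<le> j" and w: "w \<in> arcV k z"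
  have "1 / (2 * real k) \<le> 1 / (2 * real j)"
    using jk by (intro divide_left_mono) auto
  with w show "w \<in> arcV j z" unfolding arcV_def by auto
qed

lemma nbhdU_mono: "j \<le> k \<Longrightarrow> 1 \<le> j \<Longrightarrow> nbhdU k z \<subseteq> nbhdU j z"
  using arcV_mono[of j k z] unfolding nbhdU_def by blast

lemma istopology_dc_open: "istopology dc_open"
  unfolding istopology_def
proof (intro conjI allI impI ballI)
  fix S T assume S: "dc_open S" and T: "dc_open T"
  show "dc_open (S \<inter> T)"
    unfolding dc_open_def
  proof (intro conjI ballI)
    show "S \<inter> T \<subseteq> dcX" using S unfolding dc_open_def by blast
  next
    fix z assume z: "z \<in> S \<inter> T"
    show "(z \<in> C2 \<and> {z} \<subseteq> S \<inter> T) \<or> (z \<in> C1 \<and> (\<exists>j\<ge>1. nbhdU j z \<subseteq> S \<inter> T))"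
    proof (cases "z \<in> C2")
      case True then show ?thesis using z by blast
    next
      case False
      then obtain j k where j: "j \<ge> 1" "nbhdU j z \<subseteq> S" and k: "k \<ge> 1" "nbhdU k z \<subseteq> T"
        and zc: "z \<in> C1"
        using S T z unfolding dc_open_def by blast
      have "nbhdU (max j k) z \<subseteq> S \<inter> T"
        using nbhdU_mono[of j "max j k" z] nbhdU_mono[of k "max j k" z] j k by auto
      then show ?thesis using zc j by (intro disjI2) (auto intro!: exI[of _ "max j k"])
    qed
  qed
next
  fix K assume K: "\<forall>S\<in>K. dc_open S"
  show "dc_open (\<Union>K)"
    unfolding dc_open_def
  proof (intro conjI ballI)
    show "\<Union>K \<subseteq> dcX" using K unfolding dc_open_def by blast
  next
    fix z assume "z \<in> \<Union>K"
    then obtain S where S: "S \<in> K" "z \<in> S" by blast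
    then have "(z \<in> C2 \<and> {z} \<subseteq> S) \<or> (z \<in> C1 \<and> (\<exists>j\<ge>1. nbhdU j z \<subseteq> S))"
      using K unfolding dc_open_def by blast
    moreover have "S \<subseteq> \<Union>K" using S by blast
    ultimately show "(z \<in> C2 \<and> {z} \<subseteq> \<Union>K) \<or> (z \<in> C1 \<and> (\<exists>j\<ge>1. nbhdU j z \<subseteq> \<Union>K))"
      by (meson order_trans)
  qed
qed

definition double_circle :: "complex topology" where
  "double_circle = topology dc_open"

definition saturated_in :: "'a topology \<Rightarrow> 'a set \<Rightarrow> bool" where
  "saturated_in T K \<longleftrightarrow> K = topspace T \<inter> \<Inter>{U. openin T U \<and> K \<subseteq> U}"

definition KX :: "'a topology \<Rightarrow> 'a set set" where
  "KX T = {K. K \<subseteq> topspace T \<and> K \<noteq> {} \<and> compactin T K \<and> saturated_in T K}"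

definition box :: "'a topology \<Rightarrow> 'a set \<Rightarrow> 'a set set" where
  "box T U = {K \<in> KX T. K \<subseteq> U}"

definition smyth :: "'a topology \<Rightarrow> 'a set topology" where
  "smyth T = topology_generated_by {box T U | U. openin T U}"

definition countable_nbhd_base_at :: "'a topology \<Rightarrow> 'a \<Rightarrow> bool" where
  "countable_nbhd_base_at T x \<longleftrightarrow>
     (\<exists>B. countable B \<and> (\<forall>N\<in>B. N \<subseteq> topspace T \<and> x \<in> T interior_of N) \<and>
          (\<forall>U. openin T U \<and> x \<in> U \<longrightarrow> (\<exists>N\<in>B. N \<subseteq> U)))"

end

theory Submission
  imports Defs
begin

lemma C1_iff: "z \<in> C1 \<longleftrightarrow> cmod z = 1"
  by (auto simp: C1_def cmod_def)

lemma C2_iff: "z \<in> C2 \<longleftrightarrow> cmod z = sqrt 2"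
  by (auto simp: C2_def cmod_def)

lemma C1_C2_disj: "z \<in> C1 \<Longrightarrow> z \<notin> C2"
  by (auto simp: C1_iff C2_iff)

lemma proj_C1: "z \<in> C1 \<Longrightarrow> proj z \<in> C2"
  by (auto simp: C1_iff C2_iff proj_def norm_mult)

lemma proj_inj: "proj u = proj v \<Longrightarrow> u = v"
  by (auto simp: proj_def)

lemma C2_proj: "c \<in> C2 \<Longrightarrow> c / complex_of_real (sqrt 2) \<in> C1 \<and> proj (c / complex_of_real (sqrt 2)) = c"
  by (auto simp: C1_iff C2_iff proj_def norm_divide)

lemma C1_nz: "z \<in> C1 \<Longrightarrow> z \<noteq> 0"
  by (auto simp: C1_iff)

lemma arcV_C1: "arcV j z \<subseteq> C1"
  by (auto simp: arcV_def)

lemma nbhdU_dcX: "nbhdU j z \<subseteq> dcX"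
  using arcV_C1 proj_C1 by (fastforce simp: nbhdU_def dcX_def)

lemma center_arcV: "z \<in> C1 \<Longrightarrow> 1 \<le> j \<Longrightarrow> z \<in> arcV j z"
  using C1_nz[of z] by (auto simp: arcV_def)

lemma arc_small:
  assumes z: "z \<in> C1" and r: "r > 0"
  shows "\<exists>k\<ge>1. arcV k z \<subseteq> ball z r"
proof -
  have "isCont (\<lambda>t. exp (\<i> * complex_of_real t)) 0" by (intro continuous_intros)
  moreover have "cis = (\<lambda>t. exp (\<i> * complex_of_real t))" by (rule ext) (simp add: cis_conv_exp)
  ultimately have "isCont cis 0" by simp
  then obtain d where d: "d > 0" "\<And>t. dist t 0 < d \<Longrightarrow> dist (cis t) (cis 0) < r"
    using r unfolding continuous_at_eps_delta by blast
  obtain n where n: "inverse (real (Suc n)) < d" using reals_Archimedean d(1) by blast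
  define k where "k = Suc n"
  have k1: "k \<ge> 1" by (simp add: k_def)
  have kd: "1 / (2 * real k) < d"
  proof -
    have "1 / (2 * real k) \<le> 1 / real k" by (simp add: k_def divide_simps)
    with n show ?thesis by (simp add: k_def field_simps)
  qed
  have "arcV k z \<subseteq> ball z r"
  proof
    fix v assume v: "v \<in> arcV k z"
    then have vC: "v \<in> C1" and va: "\<bar>Arg (v / z)\<bar> < 1 / (2 * real k)" by (auto simp: arcV_def)
    have nz: "v / z \<noteq> 0" using vC z C1_nz by auto
    have n1: "cmod (v / z) = 1" using vC z by (simp add: C1_iff norm_divide)
    have "cis (Arg (v / z)) = v / z" using cis_Arg[OF nz] n1 by (simp add: sgn_div_norm)
    moreover have "dist (Arg (v / z)) 0 < d" using va kd by simp
    ultimately have "dist (v / z) 1 < r" using d(2) by fastforce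
    moreover have "dist v z = dist (v / z) 1"
    proof -
      have "v - z = z * (v / z - 1)" using C1_nz[OF z] by (simp add: field_simps)
      then show ?thesis using z by (simp add: dist_norm norm_mult C1_iff)
    qed
    ultimately show "v \<in> ball z r" by (simp add: dist_commute)
  qed
  with k1 show ?thesis by blast
qed

lemma arc_open:
  assumes z: "z \<in> C1" and w: "w \<in> arcV j z" and j: "j \<ge> 1"
  shows "\<exists>r>0. C1 \<inter> ball w r \<subseteq> arcV j z"
proof -
  define th where "th = Arg (w / z)"
  have wC: "w \<in> C1" and wa: "\<bar>th\<bar> < 1 / (2 * real j)" using w by (auto simp: arcV_def th_def)
  have small: "1 / (2 * real j) \<le> 1/2" using j by (simp add: divide_simps)
  have nz: "w / z \<noteq> 0" using wC z C1_nz by auto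
  have "w / z \<notin> \<real>\<^sub>\<le>\<^sub>0"
  proof
    assume "w / z \<in> \<real>\<^sub>\<le>\<^sub>0"
    then have "Re (w/z) < 0 \<and> Im (w/z) = 0" using nz complex_nonpos_Reals_iff
      by (metis complex_eq_iff order_le_less zero_complex.simps)
    then have "th = pi" using Arg_eq_pi th_def by blast
    with wa small pi_gt3 show False by linarith
  qed
  then have c1: "isCont Arg (w / z)" by (rule continuous_at_Arg)
  have "isCont (\<lambda>v. Arg (v / z)) w"
  proof -
    have "isCont (\<lambda>v. v / z) w" using C1_nz[OF z] by (intro continuous_intros)
    from isCont_o2[OF this c1] show ?thesis .
  qed
  moreover have "1 / (2 * real j) - \<bar>th\<bar> > 0" using wa by simp
  ultimately obtain r where r: "r > 0" "\<And>v. dist v w < r \<Longrightarrow> dist (Arg (v / z)) th < 1 / (2 * real j) - \<bar>th\<bar>"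
    unfolding continuous_at_eps_delta th_def by blast
  have "C1 \<inter> ball w r \<subseteq> arcV j z"
  proof
    fix v assume "v \<in> C1 \<inter> ball w r"
    then have "v \<in> C1" "dist (Arg (v / z)) th < 1 / (2 * real j) - \<bar>th\<bar>"
      using r(2) by (auto simp: dist_commute)
    then show "v \<in> arcV j z" by (auto simp: arcV_def dist_real_def)
  qed
  with r show ?thesis by blast
qed



lemma openin_dc: "openin double_circle = dc_open"
  unfolding double_circle_def by (rule topology_inverse'[OF istopology_dc_open])

lemma dc_open_dcX: "dc_open dcX"
  unfolding dc_open_def using nbhdU_dcX by (auto simp: dcX_def)

lemma topspace_dc: "topspace double_circle = dcX"
  using dc_open_dcX unfolding topspace_def openin_dc by (auto simp: dc_open_def)

lemma dc_open_nbhdU: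
  assumes z: "z \<in> C1" and j: "j \<ge> 1"
  shows "dc_open (nbhdU j z)"
  unfolding dc_open_def
proof (intro conjI ballI)
  show "nbhdU j z \<subseteq> dcX" by (rule nbhdU_dcX)
next
  fix w assume w: "w \<in> nbhdU j z"
  show "(w \<in> C2 \<and> {w} \<subseteq> nbhdU j z) \<or> (w \<in> C1 \<and> (\<exists>k\<ge>1. nbhdU k w \<subseteq> nbhdU j z))"
  proof (cases "w \<in> arcV j z")
    case False
    then have "w \<in> C2" using w proj_C1 arcV_C1 unfolding nbhdU_def by blast
    then show ?thesis using w by blast
  next
    case True
    then have wC: "w \<in> C1" using arcV_C1 by blast
    show ?thesis
    proof (cases "w = z")
      case True then show ?thesis using j wC by blast
    next
      case False
      obtain r where r: "r > 0" "C1 \<inter> ball w r \<subseteq> arcV j z" using arc_open[OF z True j] by blast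
      have "min r (dist w z) > 0" using r False by simp
      then obtain k where k: "k \<ge> 1" "arcV k w \<subseteq> ball w (min r (dist w z))"
        using arc_small[OF wC] by blast
      have "ball w (min r (dist w z)) \<subseteq> ball w r" by auto
      then have sub: "arcV k w \<subseteq> arcV j z" using k(2) r(2) arcV_C1[of k w] by blast
      have zn: "z \<notin> arcV k w" using k(2) by (auto simp: dist_commute)
      have "nbhdU k w \<subseteq> nbhdU j z" unfolding nbhdU_def using sub zn by blast
      then show ?thesis using wC k(1) by blast
    qed
  qed
qed

lemma dc_open_minus:
  assumes q: "q \<in> C2"
  shows "dc_open (dcX - {q})"
  unfolding dc_open_def
proof (intro conjI ballI)
  show "dcX - {q} \<subseteq> dcX" by blast
next
  fix w assume w: "w \<in> dcX - {q}"
  obtain z0 where z0: "z0 \<in> C1" "proj z0 = q" using C2_proj[OF q] by blast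
  show "(w \<in> C2 \<and> {w} \<subseteq> dcX - {q}) \<or> (w \<in> C1 \<and> (\<exists>k\<ge>1. nbhdU k w \<subseteq> dcX - {q}))"
  proof (cases "w \<in> C2")
    case True then show ?thesis using w by blast
  next
    case False
    then have wC: "w \<in> C1" using w by (auto simp: dcX_def)
    have qa: "q \<notin> arcV k w" for k using arcV_C1 C1_C2_disj q by blast
    show ?thesis
    proof (cases "w = z0")
      case True
      have "q \<notin> nbhdU 1 w" unfolding nbhdU_def using qa z0 True proj_inj by blast
      then show ?thesis using wC nbhdU_dcX by blast
    next
      case False
      then have "dist w z0 > 0" by simp
      then obtain k where k: "k \<ge> 1" "arcV k w \<subseteq> ball w (dist w z0)" using arc_small[OF wC] by blast
      have "z0 \<notin> arcV k w" using k(2) by auto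
      then have "q \<notin> nbhdU k w" unfolding nbhdU_def using qa z0 proj_inj by blast
      then show ?thesis using wC k(1) nbhdU_dcX by blast
    qed
  qed
qed

lemma dc_open_single: "q \<in> C2 \<Longrightarrow> dc_open {q}"
  by (auto simp: dc_open_def dcX_def)

lemma dc_open_C2: "dc_open C2"
  by (auto simp: dc_open_def dcX_def)

lemma C2_uncountable: "uncountable C2"
proof -
  have "C2 = sphere 0 (sqrt 2)" by (auto simp: C2_iff)
  moreover have "connected (sphere (0::complex) (sqrt 2))" by (rule connected_sphere) simp
  moreover have "complex_of_real (sqrt 2) \<in> sphere 0 (sqrt 2)" "- complex_of_real (sqrt 2) \<in> sphere 0 (sqrt 2)" by auto
  moreover have "complex_of_real (sqrt 2) \<noteq> - complex_of_real (sqrt 2)" by simp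
  ultimately show ?thesis using connected_uncountable by metis
qed

lemma C1_compact: "compact C1"
proof -
  have "C1 = sphere 0 1" by (auto simp: C1_iff)
  then show ?thesis using compact_sphere by metis
qed


lemma dc_compact: "compact_space double_circle"
  unfolding compact_space_def compactin_def topspace_dc openin_dc
proof (intro conjI allI impI)
  fix \<U> assume A: "(\<forall>U\<in>\<U>. dc_open U) \<and> dcX \<subseteq> \<Union>\<U>"
  have "\<forall>z\<in>C1. \<exists>r u. r > 0 \<and> u \<in> \<U> \<and> C1 \<inter> ball z r \<subseteq> u \<and> proj ` (C1 \<inter> ball z r - {z}) \<subseteq> u"
  proof
    fix z assume z: "z \<in> C1"
    then obtain u where u: "u \<in> \<U>" "z \<in> u" using A by (auto simp: dcX_def)
    have "dc_open u" using A u(1) by blast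
    then obtain j where j: "j \<ge> 1" "nbhdU j z \<subseteq> u" using u(2) C1_C2_disj[OF z] unfolding dc_open_def by blast
    obtain r where r: "r > 0" "C1 \<inter> ball z r \<subseteq> arcV j z" using arc_open[OF z center_arcV[OF z j(1)] j(1)] by blast
    have "C1 \<inter> ball z r \<subseteq> u \<and> proj ` (C1 \<inter> ball z r - {z}) \<subseteq> u"
      using r(2) j(2) unfolding nbhdU_def by blast
    then show "\<exists>r u. r > 0 \<and> u \<in> \<U> \<and> C1 \<inter> ball z r \<subseteq> u \<and> proj ` (C1 \<inter> ball z r - {z}) \<subseteq> u"
      using r(1) u(1) by blast
  qed
  then obtain R where "\<forall>z\<in>C1. \<exists>u. R z > 0 \<and> u \<in> \<U> \<and> C1 \<inter> ball z (R z) \<subseteq> u \<and> proj ` (C1 \<inter> ball z (R z) - {z}) \<subseteq> u"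
    by (auto dest!: bchoice)
  then have R0: "\<forall>z\<in>C1. R z > 0" and "\<forall>z\<in>C1. \<exists>u. u \<in> \<U> \<and> C1 \<inter> ball z (R z) \<subseteq> u \<and> proj ` (C1 \<inter> ball z (R z) - {z}) \<subseteq> u"
    by auto
  then obtain Uf where "\<forall>z\<in>C1. Uf z \<in> \<U> \<and> C1 \<inter> ball z (R z) \<subseteq> Uf z \<and> proj ` (C1 \<inter> ball z (R z) - {z}) \<subseteq> Uf z"
    by (auto dest!: bchoice)
  with R0 have RU': "\<forall>z\<in>C1. R z > 0 \<and> Uf z \<in> \<U> \<and> C1 \<inter> ball z (R z) \<subseteq> Uf z \<and> proj ` (C1 \<inter> ball z (R z) - {z}) \<subseteq> Uf z"
    by blast
  then have RU: "\<And>z. z \<in> C1 \<Longrightarrow> R z > 0 \<and> Uf z \<in> \<U> \<and> C1 \<inter> ball z (R z) \<subseteq> Uf z \<and> proj ` (C1 \<inter> ball z (R z) - {z}) \<subseteq> Uf z"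
    by blast
  have "\<forall>c\<in>C2. \<exists>u. u \<in> \<U> \<and> c \<in> u" using A by (auto simp: dcX_def)
  then obtain G where "\<forall>c\<in>C2. G c \<in> \<U> \<and> c \<in> G c" by (auto dest!: bchoice)
  then have G: "\<And>c. c \<in> C2 \<Longrightarrow> G c \<in> \<U> \<and> c \<in> G c" by blast
  have cov: "C1 \<subseteq> \<Union>((\<lambda>z. ball z (R z)) ` C1)"
  proof
    fix x assume x: "x \<in> C1"
    then have "x \<in> ball x (R x)" using RU[OF x] by simp
    then show "x \<in> \<Union>((\<lambda>z. ball z (R z)) ` C1)" using x by blast
  qed
  obtain T where T: "T \<subseteq> C1" "finite T" "C1 \<subseteq> \<Union>((\<lambda>z. ball z (R z)) ` T)"
    by (rule compactE_image[OF C1_compact _ cov]) auto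
  define F where "F = Uf ` T \<union> G ` (proj ` T)"
  have "finite F" using T(2) by (simp add: F_def)
  moreover have "F \<subseteq> \<U>"
  proof -
    have "Uf ` T \<subseteq> \<U>" using T(1) RU by blast
    moreover have "G ` (proj ` T) \<subseteq> \<U>" using T(1) G proj_C1 by blast
    ultimately show ?thesis by (simp add: F_def)
  qed
  moreover have "dcX \<subseteq> \<Union>F"
  proof
    fix x assume "x \<in> dcX"
    then consider "x \<in> C1" | "x \<in> C2" by (auto simp: dcX_def)
    then show "x \<in> \<Union>F"
    proof cases
      case 1
      then obtain t where t: "t \<in> T" "x \<in> ball t (R t)" using T(3) by blast
      then have "x \<in> Uf t" using RU[of t] T(1) 1 by blast
      then show ?thesis using t(1) by (auto simp: F_def)
    next
      case 2
      obtain v where v: "v \<in> C1" "proj v = x" using C2_proj[OF 2] by blast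
      then obtain t where t: "t \<in> T" "v \<in> ball t (R t)" using T(3) by blast
      show ?thesis
      proof (cases "v = t")
        case True
        then have "G x \<in> F" using t(1) v(2) by (auto simp: F_def)
        then show ?thesis using G[OF 2] by blast
      next
        case False
        then have "x \<in> Uf t" using RU[of t] T(1) t v by blast
        then show ?thesis using t(1) by (auto simp: F_def)
      qed
    qed
  qed
  ultimately show "\<exists>\<F>. finite \<F> \<and> \<F> \<subseteq> \<U> \<and> dcX \<subseteq> \<Union>\<F>" by blast
qed auto


lemma dc_Hausdorff: "Hausdorff_space double_circle"
  unfolding Hausdorff_space_def topspace_dc openin_dc
proof (intro allI impI)
  fix x y assume xy: "x \<in> dcX \<and> y \<in> dcX \<and> x \<noteq> y"
  show "\<exists>U V. dc_open U \<and> dc_open V \<and> x \<in> U \<and> y \<in> V \<and> disjnt U V"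
  proof (cases "x \<in> C2")
    case True
    then show ?thesis using xy dc_open_single[OF True] dc_open_minus[OF True]
      by (intro exI[of _ "{x}"] exI[of _ "dcX - {x}"]) (auto simp: disjnt_def)
  next
    case xn: False
    show ?thesis
    proof (cases "y \<in> C2")
      case True
      then show ?thesis using xy dc_open_single[OF True] dc_open_minus[OF True]
        by (intro exI[of _ "dcX - {y}"] exI[of _ "{y}"]) (auto simp: disjnt_def)
    next
      case False
      then have xC: "x \<in> C1" and yC: "y \<in> C1" using xn xy by (auto simp: dcX_def)
      define r where "r = dist x y / 2"
      have r: "r > 0" using xy by (simp add: r_def)
      obtain k1 where k1: "k1 \<ge> 1" "arcV k1 x \<subseteq> ball x r" using arc_small[OF xC r] by blast
      obtain k2 where k2: "k2 \<ge> 1" "arcV k2 y \<subseteq> ball y r" using arc_small[OF yC r] by blast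
      define k where "k = max k1 k2"
      have k: "k \<ge> 1" "arcV k x \<subseteq> ball x r" "arcV k y \<subseteq> ball y r"
        using k1 k2 arcV_mono[of k1 k x] arcV_mono[of k2 k y] by (auto simp: k_def)
      have d: "arcV k x \<inter> arcV k y = {}"
      proof (rule ccontr)
        assume "arcV k x \<inter> arcV k y \<noteq> {}"
        then obtain v where "v \<in> arcV k x" "v \<in> arcV k y" by blast
        then have "dist x v < r" "dist y v < r" using k(2,3) by auto
        then have "dist x y < 2 * r" using dist_triangle3[of x y v] by (simp add: dist_commute)
        then show False by (simp add: r_def)
      qed
      have "disjnt (nbhdU k x) (nbhdU k y)"
        unfolding disjnt_def nbhdU_def using d proj_inj proj_C1 C1_C2_disj arcV_C1[of k x] arcV_C1[of k y]
        by blast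
      then show ?thesis using dc_open_nbhdU[OF xC k(1)] dc_open_nbhdU[OF yC k(1)]
          center_arcV[OF xC k(1)] center_arcV[OF yC k(1)]
        by (intro exI[of _ "nbhdU k x"] exI[of _ "nbhdU k y"]) (auto simp: nbhdU_def)
    qed
  qed
qed


lemma dc_first_countable: "first_countable double_circle"
  unfolding first_countable_def topspace_dc openin_dc
proof
  fix x assume x: "x \<in> dcX"
  show "\<exists>\<B>. countable \<B> \<and> (\<forall>V\<in>\<B>. dc_open V) \<and> (\<forall>U. dc_open U \<and> x \<in> U \<longrightarrow> (\<exists>V\<in>\<B>. x \<in> V \<and> V \<subseteq> U))"
  proof (cases "x \<in> C2")
    case True
    then show ?thesis using dc_open_single[OF True] by (intro exI[of _ "{{x}}"]) auto
  next
    case False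
    then have xC: "x \<in> C1" using x by (auto simp: dcX_def)
    show ?thesis
    proof (intro exI[of _ "range (\<lambda>j. nbhdU (Suc j) x)"] conjI ballI allI impI)
      show "countable (range (\<lambda>j. nbhdU (Suc j) x))" by simp
    next
      fix V assume "V \<in> range (\<lambda>j. nbhdU (Suc j) x)"
      then show "dc_open V" using dc_open_nbhdU[OF xC] by auto
    next
      fix U assume U: "dc_open U \<and> x \<in> U"
      then obtain j where j: "j \<ge> 1" "nbhdU j x \<subseteq> U" using False U[unfolded dc_open_def] by blast
      then have "nbhdU (Suc (j - 1)) x \<in> range (\<lambda>j. nbhdU (Suc j) x)" by blast
      moreover have "Suc (j - 1) = j" using j by simp
      moreover have "x \<in> nbhdU j x" using center_arcV[OF xC j(1)] by (auto simp: nbhdU_def)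
      ultimately show "\<exists>V\<in>range (\<lambda>j. nbhdU (Suc j) x). x \<in> V \<and> V \<subseteq> U" using j(2) by metis
    qed
  qed
qed


lemma C1_KX: "C1 \<in> KX double_circle"
proof -
  have "closedin double_circle C1"
  proof -
    have "topspace double_circle - C1 = C2" using C1_C2_disj by (auto simp: topspace_dc dcX_def)
    then show ?thesis unfolding closedin_def using dc_open_C2 by (auto simp: topspace_dc openin_dc dcX_def)
  qed
  then have "compactin double_circle C1" using closedin_compact_space dc_compact by blast
  moreover have "(1::complex) \<in> C1" by (simp add: C1_iff)
  moreover have "saturated_in double_circle C1"
    unfolding saturated_in_def topspace_dc openin_dc
  proof
    show "C1 \<subseteq> dcX \<inter> \<Inter> {U. dc_open U \<and> C1 \<subseteq> U}" by (auto simp: dcX_def)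
  next
    show "dcX \<inter> \<Inter> {U. dc_open U \<and> C1 \<subseteq> U} \<subseteq> C1"
    proof
      fix x assume x: "x \<in> dcX \<inter> \<Inter> {U. dc_open U \<and> C1 \<subseteq> U}"
      show "x \<in> C1"
      proof (rule ccontr)
        assume "x \<notin> C1"
        then have xC: "x \<in> C2" using x by (auto simp: dcX_def)
        have "C1 \<subseteq> dcX - {x}" using C1_C2_disj xC by (auto simp: dcX_def)
        then show False using x dc_open_minus[OF xC] by blast
      qed
    qed
  qed
  ultimately show ?thesis unfolding KX_def by (auto simp: topspace_dc dcX_def)
qed


lemma single_KX: "q \<in> C2 \<Longrightarrow> {q} \<in> KX double_circle"
  unfolding KX_def saturated_in_def topspace_dc openin_dc
  using dc_open_single[of q] by (auto simp: dcX_def intro!: finite_imp_compactin simp: topspace_dc)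




lemma finite_miss:
  assumes W: "dc_open W" and C: "C1 \<subseteq> W"
  shows "finite (C2 - W)"
proof -
  define E where "E = {w \<in> C1. proj w \<notin> W}"
  have "finite E"
  proof (rule ccontr)
    assume inf: "infinite E"
    have "E \<subseteq> C1" by (auto simp: E_def)
    then have "\<exists>x\<in>C1. x islimpt E"
      using C1_compact inf compact_eq_Bolzano_Weierstrass by metis
    then obtain x where x: "x \<in> C1" "x islimpt E" by blast
    have "x \<in> W" using C x(1) by blast
    then obtain j where j: "j \<ge> 1" "nbhdU j x \<subseteq> W"
      using W[unfolded dc_open_def] C1_C2_disj[OF x(1)] by blast
    obtain r where r: "r > 0" "C1 \<inter> ball x r \<subseteq> arcV j x"
      using arc_open[OF x(1) center_arcV[OF x(1) j(1)] j(1)] by blast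
    obtain y where y: "y \<in> E" "y \<noteq> x" "dist y x < r"
      using x(2) r(1) unfolding islimpt_approachable by blast
    have "y \<in> C1" using y(1) by (simp add: E_def)
    then have "y \<in> arcV j x" using r(2) y(3) by (auto simp: dist_commute)
    then have "proj y \<in> nbhdU j x" using y(2) unfolding nbhdU_def by blast
    then have "proj y \<in> W" using j(2) by blast
    then show False using y(1) by (simp add: E_def)
  qed
  moreover have "C2 - W \<subseteq> proj ` E"
  proof
    fix c assume c: "c \<in> C2 - W"
    then obtain v where "v \<in> C1" "proj v = c" using C2_proj by blast
    then show "c \<in> proj ` E" using c by (auto simp: E_def)
  qed
  ultimately show ?thesis using finite_subset by blast
qed


lemma gen_box:
  assumes "generate_topology_on {box double_circle U | U. openin double_circle U} Q"
  shows "C1 \<in> Q \<Longrightarrow> \<exists>W. openin double_circle W \<and> C1 \<subseteq> W \<and> box double_circle W \<subseteq> Q"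
  using assms
proof (induction rule: generate_topology_on.induct)
  case Empty
  then show ?case by simp
next
  case (Int a b)
  then obtain W1 W2 where "openin double_circle W1" "C1 \<subseteq> W1" "box double_circle W1 \<subseteq> a"
    "openin double_circle W2" "C1 \<subseteq> W2" "box double_circle W2 \<subseteq> b" by blast
  moreover have "openin double_circle (W1 \<inter> W2)" using calculation by (simp add: openin_Int)
  moreover have "box double_circle (W1 \<inter> W2) \<subseteq> a \<inter> b"
  proof -
    have "box double_circle (W1 \<inter> W2) \<subseteq> box double_circle W1 \<inter> box double_circle W2"
      unfolding box_def by blast
    then show ?thesis using calculation by blast
  qed
  ultimately show ?case by blast
next
  case (UN K)
  then obtain k where "k \<in> K" "C1 \<in> k" by blast
  then obtain W where "openin double_circle W" "C1 \<subseteq> W" "box double_circle W \<subseteq> k" using UN.IH by blast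
  then show ?case using \<open>k \<in> K\<close> by blast
next
  case (Basis s)
  then obtain U where "s = box double_circle U" "openin double_circle U" by blast
  moreover have "C1 \<subseteq> U" using Basis.prems calculation unfolding box_def by blast
  ultimately show ?case by blast
qed



lemma topspace_smyth: "topspace (smyth double_circle) = box double_circle dcX"
proof -
  have "\<Union>{box double_circle U | U. openin double_circle U} = box double_circle dcX"
  proof
    show "\<Union>{box double_circle U | U. openin double_circle U} \<subseteq> box double_circle dcX"
    proof
      fix K assume "K \<in> \<Union>{box double_circle U | U. openin double_circle U}"
      then obtain U where U: "K \<in> box double_circle U" "openin double_circle U" by blast
      have "U \<subseteq> dcX" using openin_subset[OF U(2)] by (simp add: topspace_dc)
      then show "K \<in> box double_circle dcX" using U(1) unfolding box_def by blast
    qed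
    show "box double_circle dcX \<subseteq> \<Union>{box double_circle U | U. openin double_circle U}"
    proof -
      have "openin double_circle dcX" by (simp add: openin_dc dc_open_dcX)
      then show ?thesis by blast
    qed
  qed
  then show ?thesis unfolding smyth_def by simp
qed

lemma C1_topspace_smyth: "C1 \<in> topspace (smyth double_circle)"
proof -
  have "C1 \<subseteq> dcX" by (auto simp: dcX_def)
  then show ?thesis unfolding topspace_smyth box_def using C1_KX by blast
qed



lemma no_cnb: "\<not> countable_nbhd_base_at (smyth double_circle) C1"
proof
  assume "countable_nbhd_base_at (smyth double_circle) C1"
  then obtain B where B1: "countable B" and B2: "\<forall>N\<in>B. N \<subseteq> topspace (smyth double_circle) \<and> C1 \<in> smyth double_circle interior_of N"
    and Bp: "\<forall>U. openin (smyth double_circle) U \<and> C1 \<in> U \<longrightarrow> (\<exists>N\<in>B. N \<subseteq> U)"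
    unfolding countable_nbhd_base_at_def by metis
  have "\<forall>N\<in>B. \<exists>W. openin double_circle W \<and> C1 \<subseteq> W \<and> box double_circle W \<subseteq> N"
  proof
    fix N assume N: "N \<in> B"
    then have "C1 \<in> smyth double_circle interior_of N" using B2 by blast
    then obtain T where T: "openin (smyth double_circle) T" "C1 \<in> T" "T \<subseteq> N"
      unfolding interior_of_def by blast
    have "generate_topology_on {box double_circle U | U. openin double_circle U} T"
      using T(1) unfolding smyth_def openin_topology_generated_by_iff .
    from gen_box[OF this T(2)] obtain W where "openin double_circle W" "C1 \<subseteq> W" "box double_circle W \<subseteq> T"
      by blast
    then show "\<exists>W. openin double_circle W \<and> C1 \<subseteq> W \<and> box double_circle W \<subseteq> N" using T(3) by blast
  qed
  then obtain Wf where Wf: "\<forall>N\<in>B. openin double_circle (Wf N) \<and> C1 \<subseteq> Wf N \<and> box double_circle (Wf N) \<subseteq> N"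
    using bchoice by metis
  define Bad where "Bad = (\<Union>N\<in>B. C2 - Wf N)"
  have "countable Bad"
    unfolding Bad_def
  proof (rule countable_UN[OF B1])
    fix N assume "N \<in> B"
    then have "openin double_circle (Wf N)" "C1 \<subseteq> Wf N" using Wf by auto
    then have "finite (C2 - Wf N)" using finite_miss[of "Wf N"] by (simp add: openin_dc)
    then show "countable (C2 - Wf N)" by (rule countable_finite)
  qed
  have "\<not> C2 \<subseteq> Bad"
  proof
    assume "C2 \<subseteq> Bad"
    then have "countable C2" using \<open>countable Bad\<close> by (rule countable_subset)
    then show False using C2_uncountable by contradiction
  qed
  then obtain q where q: "q \<in> C2" "q \<notin> Bad" by blast
  define U where "U = box double_circle (dcX - {q})"
  have "openin double_circle (dcX - {q})" using dc_open_minus[OF q(1)] by (simp add: openin_dc)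
  then have "U \<in> {box double_circle U | U. openin double_circle U}" unfolding U_def by blast
  then have "openin (smyth double_circle) U"
    unfolding smyth_def openin_topology_generated_by_iff by (rule generate_topology_on.Basis)
  moreover have "C1 \<in> U"
  proof -
    have "C1 \<subseteq> dcX - {q}" using C1_C2_disj q(1) by (auto simp: dcX_def)
    then show ?thesis unfolding U_def box_def using C1_KX by blast
  qed
  ultimately obtain N where N: "N \<in> B" "N \<subseteq> U" using Bp by blast
  have "q \<in> Wf N" using q N(1) unfolding Bad_def by blast
  then have "{q} \<in> box double_circle (Wf N)" using single_KX[OF q(1)] unfolding box_def by blast
  moreover have "box double_circle (Wf N) \<subseteq> N" using Wf N(1) by blast
  ultimately have "{q} \<in> U" using N(2) by blast
  then show False unfolding U_def box_def by blast
qed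



lemma no_fc: "\<not> first_countable (smyth double_circle)"
proof
  assume "first_countable (smyth double_circle)"
  then have "\<exists>B. countable B \<and> (\<forall>V\<in>B. openin (smyth double_circle) V) \<and>
    (\<forall>U. openin (smyth double_circle) U \<and> C1 \<in> U \<longrightarrow> (\<exists>V\<in>B. C1 \<in> V \<and> V \<subseteq> U))"
    using C1_topspace_smyth unfolding first_countable_def by (rule bspec)
  then obtain B where B1: "countable B" and B2: "\<forall>V\<in>B. openin (smyth double_circle) V"
    and B3: "\<forall>U. openin (smyth double_circle) U \<and> C1 \<in> U \<longrightarrow> (\<exists>V\<in>B. C1 \<in> V \<and> V \<subseteq> U)"
    by blast
  have "countable_nbhd_base_at (smyth double_circle) C1"
    unfolding countable_nbhd_base_at_def
  proof (intro exI[of _ "{V\<in>B. C1 \<in> V}"] conjI ballI allI impI)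
    have "{V\<in>B. C1 \<in> V} \<subseteq> B" by blast
    then show "countable {V\<in>B. C1 \<in> V}" using B1 by (rule countable_subset)
  next
    fix N assume N: "N \<in> {V\<in>B. C1 \<in> V}"
    then have o: "openin (smyth double_circle) N" using B2 by auto
    show "N \<subseteq> topspace (smyth double_circle)" using o by (simp add: openin_subset)
  next
    fix N assume N: "N \<in> {V\<in>B. C1 \<in> V}"
    then have o: "openin (smyth double_circle) N" and c: "C1 \<in> N" using B2 by auto
    show "C1 \<in> smyth double_circle interior_of N" using c interior_of_openin[OF o] by simp
  next
    fix U assume U: "openin (smyth double_circle) U \<and> C1 \<in> U"
    then obtain V where "V \<in> B" "C1 \<in> V" "V \<subseteq> U" using B3 by blast
    then show "\<exists>N\<in>{V\<in>B. C1 \<in> V}. N \<subseteq> U" by blast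
  qed
  with no_cnb show False by blast
qed

theorem mainTheorem4:
  shows "compact_space double_circle \<and> Hausdorff_space double_circle \<and>
         first_countable double_circle \<and> C1 \<in> KX double_circle \<and>
         \<not> first_countable (smyth double_circle) \<and>
         \<not> countable_nbhd_base_at (smyth double_circle) C1"
  using dc_compact dc_Hausdorff dc_first_countable C1_KX no_fc no_cnb by simp


end
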